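(* Let $\mathcal{M}$ be any mechanism that always returns a \textsc{Min-Max} outcome (an outcome minimizing $\max_{i\in N}d_i(\mathbf{o})$). Then $\mathcal{M}$ is not strategyproof: there exist an instance $(N,P,T,(\mathbf{D}_i)_{i\in N})$, an agent $i\in N$ and a disapproval vector $\mathbf{D}'_i$ with $d_i(\mathcal{M}(\mathcal{D}_{-i},\mathbf{D}'_i))<d_i(\mathcal{M}(\mathcal{D}_{-i},\mathbf{D}_i))$.
   Context: An instance is $(N,P,T,(\mathbf{D}_i)_{i\in N})$ with agents $N=[n]$, projects $P$, timesteps $T=[\ell]$, and disapproval vectors $\mathbf{D}_i=(D_{i1},\dots,D_{i\ell})$, $D_{ik}\subseteq P$. An outcome is $\mathbf{o}\in P^\ell$ and $d_i(\mathbf{o})=|\{k\in T:o_k\in D_{ik}\}|$, computed with respect to $i$'s true disapproval vector. A mechanism maps each instance to an outcome; it is strategyproof if for every instance, every agent $i$ and every $\mathbf{D}'_i$, $d_i(\mathcal{M}(\mathcal{D}_{-i},\mathbf{D}_i))\le d_i(\mathcal{M}(\mathcal{D}_{-i},\mathbf{D}'_i))$, where $\mathcal{D}_{-i}$ is the list of disapproval vectors of the agents other than $i$. *)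

theory Defs
  imports Main
begin

text \<open>Agents are 0..n-1, timesteps are 0..l-1 (a relabelling of [n] and [l]).
  Projects are natural numbers; an instance fixes a finite nonempty project set P.
  A disapproval profile is D :: agent => timestep => project set.\<close>

type_synonym profile = "nat \<Rightarrow> nat \<Rightarrow> nat set"
type_synonym outcome = "nat list"

definition valid_profile :: "nat \<Rightarrow> nat set \<Rightarrow> nat \<Rightarrow> profile \<Rightarrow> bool" where
  "valid_profile n P l D \<longleftrightarrow> (\<forall>i<n. \<forall>k<l. D i k \<subseteq> P)"

definition valid_instance :: "nat \<Rightarrow> nat set \<Rightarrow> nat \<Rightarrow> profile \<Rightarrow> bool" where
  "valid_instance n P l D \<longleftrightarrow> n \<ge> 1 \<and> finite P \<and> P \<noteq> {} \<and> valid_profile n P l D"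

definition valid_outcome :: "nat set \<Rightarrow> nat \<Rightarrow> outcome \<Rightarrow> bool" where
  "valid_outcome P l x \<longleftrightarrow> length x = l \<and> set x \<subseteq> P"

definition dis :: "profile \<Rightarrow> nat \<Rightarrow> nat \<Rightarrow> outcome \<Rightarrow> nat" where
  "dis D i l x = card {k. k < l \<and> x ! k \<in> D i k}"

definition max_dis :: "nat \<Rightarrow> nat \<Rightarrow> profile \<Rightarrow> outcome \<Rightarrow> nat" where
  "max_dis n l D x = Max {dis D i l x | i. i < n}"

definition is_minmax :: "nat \<Rightarrow> nat set \<Rightarrow> nat \<Rightarrow> profile \<Rightarrow> outcome \<Rightarrow> bool" where
  "is_minmax n P l D x \<longleftrightarrow> valid_outcome P l x \<and>
     (\<forall>y. valid_outcome P l y \<longrightarrow> max_dis n l D x \<le> max_dis n l D y)"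

type_synonym mechanism = "nat \<Rightarrow> nat set \<Rightarrow> nat \<Rightarrow> profile \<Rightarrow> outcome"

definition always_minmax :: "mechanism \<Rightarrow> bool" where
  "always_minmax M \<longleftrightarrow> (\<forall>n P l D. valid_instance n P l D \<longrightarrow> is_minmax n P l D (M n P l D))"

definition strategyproof :: "mechanism \<Rightarrow> bool" where
  "strategyproof M \<longleftrightarrow> (\<forall>n P l D i D'. valid_instance n P l D \<and> i < n \<and>
     valid_instance n P l (D(i := D')) \<longrightarrow>
     dis D i l (M n P l D) \<le> dis D i l (M n P l (D(i := D'))))"

end

theory Submission
  imports Defs
begin

lemma cardSuc: "card {k. k < Suc n \<and> Q k} = card {k. k < n \<and> Q k} + (if Q n then 1 else 0)"
proof (cases "Q n")
  case True
  have "{k. k < Suc n \<and> Q k} = insert n {k. k < n \<and> Q k}" using True by (auto simp: less_Suc_eq)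
  then show ?thesis using True by simp
next
  case False
  have "{k. k < Suc n \<and> Q k} = {k. k < n \<and> Q k}" using False by (auto simp: less_Suc_eq)
  then show ?thesis using False by simp
qed
lemma card3: "card {k. k < (3::nat) \<and> Q k} = (if Q 0 then 1 else 0) + (if Q 1 then 1 else 0) + (if Q 2 then 1 else 0)"
proof -
  have "card {k. k < Suc (Suc (Suc 0)) \<and> Q k} = (if Q 0 then 1 else 0) + (if Q (Suc 0) then 1 else 0) + (if Q (Suc (Suc 0)) then 1 else 0)"
    unfolding cardSuc by simp
  moreover have "(3::nat) = Suc (Suc (Suc 0))" "(2::nat) = Suc (Suc 0)" "(1::nat) = Suc 0" by simp_all
  ultimately show ?thesis by metis
qed

lemma set2: "{f i | i. i < (2::nat)} = {f 0, f 1}"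
  by (auto simp: less_Suc_eq numeral_2_eq_2)

lemma maxdis2: "max_dis 2 l D x = max (dis D 0 l x) (dis D 1 l x)"
  unfolding max_dis_def set2 by simp

theorem proposition2:
  fixes M :: mechanism
  assumes "always_minmax M"
  shows "\<exists>n P l D i D'. valid_instance n P l D \<and> i < n \<and>
           valid_instance n P l (D(i := D')) \<and>
           dis D i l (M n P l (D(i := D'))) < dis D i l (M n P l D)"
proof -
  define D :: profile where "D = (\<lambda>i k. if i = 0 then (if k = 1 then {1} else {})
      else (if k = 1 then {0} else if k = 2 then {0,1} else {}))"
  define D' :: "nat \<Rightarrow> nat set" where "D' = (\<lambda>k. if k = 1 then {1} else {0,1})"
  define P :: "nat set" where "P = {0,1}"
  have vi: "valid_instance 2 P 3 D" unfolding valid_instance_def valid_profile_def D_def P_def by auto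
  have vi': "valid_instance 2 P 3 (D(0 := D'))" unfolding valid_instance_def valid_profile_def D_def D'_def P_def by auto
  define x where "x = M 2 P 3 D"
  define z where "z = M 2 P 3 (D(0 := D'))"
  have mx: "is_minmax 2 P 3 D x" using assms vi unfolding always_minmax_def x_def by blast
  have mz: "is_minmax 2 P 3 (D(0 := D')) z" using assms vi' unfolding always_minmax_def z_def by blast
  have vy: "valid_outcome P 3 [0,1,0]" "valid_outcome P 3 [0,0,0]" unfolding valid_outcome_def P_def by auto
  have lx: "length x = 3" "set x \<subseteq> {0,1}" using mx unfolding is_minmax_def valid_outcome_def P_def by auto
  have lz: "length z = 3" "set z \<subseteq> {0,1}" using mz unfolding is_minmax_def valid_outcome_def P_def by auto
  have "x ! 1 \<in> set x" "x ! 2 \<in> set x" using lx(1) by simp_all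
  hence x1: "x ! 1 \<in> {0,1}" "x ! 2 \<in> {0,1}" using lx(2) by blast+
  have "z ! 0 \<in> set z" "z ! 1 \<in> set z" "z ! 2 \<in> set z" using lz(1) by simp_all
  hence z1: "z ! 0 \<in> {0,1}" "z ! 1 \<in> {0,1}" "z ! 2 \<in> {0,1}" using lz(2) by blast+
  have "max_dis 2 3 D x \<le> max_dis 2 3 D [0,1,0]" using mx vy unfolding is_minmax_def by blast
  moreover have "max_dis 2 3 D [0,1,0] = 1"
    unfolding maxdis2 dis_def card3 D_def by simp
  moreover have "x ! 1 = 0 \<Longrightarrow> dis D 1 3 x = 2"
    using x1(2) unfolding dis_def card3 D_def by auto
  ultimately have "x ! 1 \<noteq> 0" unfolding maxdis2 by fastforce
  hence hx: "x ! 1 = 1" using x1(1) by simp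
  have "max_dis 2 3 (D(0 := D')) z \<le> max_dis 2 3 (D(0 := D')) [0,0,0]" using mz vy unfolding is_minmax_def by blast
  moreover have "max_dis 2 3 (D(0 := D')) [0,0,0] = 2"
    unfolding maxdis2 dis_def card3 D_def D'_def by simp
  moreover have "z ! 1 = 1 \<Longrightarrow> dis (D(0 := D')) 0 3 z = 3"
    using z1 unfolding dis_def card3 D'_def by auto
  ultimately have "z ! 1 \<noteq> 1" unfolding maxdis2 by fastforce
  hence hz: "z ! 1 = 0" using z1(2) by simp
  have "dis D 0 3 x = 1" using hx unfolding dis_def card3 D_def by simp
  moreover have "dis D 0 3 z = 0" using hz unfolding dis_def card3 D_def by simp
  ultimately have "dis D 0 3 z < dis D 0 3 x" by simp
  hence "valid_instance 2 P 3 D \<and> (0::nat) < 2 \<and> valid_instance 2 P 3 (D(0 := D')) \<and>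
     dis D 0 3 (M 2 P 3 (D(0 := D'))) < dis D 0 3 (M 2 P 3 D)" using vi vi' unfolding x_def z_def by (intro conjI) (assumption | rule zero_less_numeral)+
  thus ?thesis by (intro exI[of _ 2] exI[of _ P] exI[of _ 3] exI[of _ D] exI[of _ 0] exI[of _ D'])
qed

end
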